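(* Let $n,m\ge1$, $c_1,\dots,c_n>0$, $T>0$, $\epsilon>0$, $r_1,\dots,r_m>0$ constant, and $\kappa_{ij}\ge0$. Define: - $\mu_j(q_j)=0$ if $q_j\le c_j$ and $\mu_j(q_j)=T(1-c_j/q_j)$ if $q_j>c_j$ (i.e. $\mu_j(q_j)=T[1-c_j/q_j]^+$); - for $\mu\in\mathbb{R}^n$, $\delta_{ij}(\mu)=\dfrac{e^{-(\kappa_{ij}+\mu_j)/\epsilon}}{\sum_{k=1}^n e^{-(\kappa_{ik}+\mu_k)/\epsilon}}$; - $\beta_j(q_j)=0$ if $q_j\le c_j$, $\beta_j(q_j)=q_j-c_j-c_j\log(q_j/c_j)$ if $q_j>c_j$. Consider the dynamical system in $q\in\mathbb{R}^n$: $$\dot q_j=\sum_{i=1}^m x_{ij}-\frac{q_j}{T},\qquad \mu_j=\mu_j(q_j),\qquad x_{ij}=r_i\,\delta_{ij}(\mu),$$ and call $(X^*,q^*,\mu^* )$ an equilibrium point if $\mu^*_j=\mu_j(q^*_j)$, $x^*_{ij}=r_i\delta_{ij}(\mu^* )$ and $\sum_i x^*_{ij}=q^*_j/T$ for all $i,j$. Define the Lagrangian $$L(X,q,\mu)=\sum_{i,j}\kappa_{ij}x_{ij}+\sum_j\beta_j(q_j)+\epsilon\sum_{i,j}x_{ij}\log\Big(\frac{x_{ij}}{r_i}\Big)+\sum_j\mu_j\Big[\sum_i x_{ij}-\frac{q_j}{T}\Big]$$ for $X$ in the set $S=\{X: x_{ij}\ge0,\ \sum_j x_{ij}=r_i\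 \forall i\}$, $q\in\mathbb{R}^n$, $\mu\in\mathbb{R}^n$, and call $(X^*,q^*,\mu^* )$ a saddle point of $L$ if $(X^*,q^* )$ minimizes $L(\cdot,\cdot,\mu^* )$ over $S\times\mathbb{R}^n$ and $\mu^*$ maximizes $L(X^*,q^*,\cdot)$ over $\mathbb{R}^n$. Then the following are equivalent: (i) $(X^*,q^*,\mu^* )$ is a saddle point of $L$; (ii) $(X^*,q^*,\mu^* )$ is an equilibrium point of the dynamics. In particular, the dynamics have a unique equilibrium point.
   Context: Convention $0\log0=0$. The dynamics model queues $q_j$ at $n$ EV charging stations with capacities $c_j$, fed by requests from $m$ locations at rates $r_i$ with travel times $\kappa_{ij}$, mean sojourn time $T$, waiting delays $\mu_j$, and soft-min (logit) station selection with parameter $\epsilon$. *)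

theory Defs
  imports Complex_Main
begin

text \<open>Indices: stations j < n, locations i < m. Vectors are nat => real,
  X is nat => nat => real with X i j = x_ij. Note ln 0 = 0 in Isabelle,
  so x * ln (x / r) realises the convention 0 log 0 = 0.\<close>

definition mu_fn :: "real \<Rightarrow> real \<Rightarrow> real \<Rightarrow> real" where
  "mu_fn T c q = (if q \<le> c then 0 else T * (1 - c / q))"

definition delta :: "nat \<Rightarrow> (nat \<Rightarrow> nat \<Rightarrow> real) \<Rightarrow> real \<Rightarrow> (nat \<Rightarrow> real) \<Rightarrow> nat \<Rightarrow> nat \<Rightarrow> real" where
  "delta n kappa eps mu i j =
     exp (- (kappa i j + mu j) / eps) / (\<Sum>k<n. exp (- (kappa i k + mu k) / eps))"

definition beta :: "real \<Rightarrow> real \<Rightarrow> real" where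
  "beta c q = (if q \<le> c then 0 else q - c - c * ln (q / c))"

definition lagr :: "nat \<Rightarrow> nat \<Rightarrow> (nat \<Rightarrow> nat \<Rightarrow> real) \<Rightarrow> (nat \<Rightarrow> real) \<Rightarrow> real \<Rightarrow> real
    \<Rightarrow> (nat \<Rightarrow> real) \<Rightarrow> (nat \<Rightarrow> nat \<Rightarrow> real) \<Rightarrow> (nat \<Rightarrow> real) \<Rightarrow> (nat \<Rightarrow> real) \<Rightarrow> real" where
  "lagr n m kappa c T eps r X q mu =
     (\<Sum>i<m. \<Sum>j<n. kappa i j * X i j)
     + (\<Sum>j<n. beta (c j) (q j))
     + eps * (\<Sum>i<m. \<Sum>j<n. X i j * ln (X i j / r i))
     + (\<Sum>j<n. mu j * ((\<Sum>i<m. X i j) - q j / T))"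

definition inS :: "nat \<Rightarrow> nat \<Rightarrow> (nat \<Rightarrow> real) \<Rightarrow> (nat \<Rightarrow> nat \<Rightarrow> real) \<Rightarrow> bool" where
  "inS n m r X \<longleftrightarrow> (\<forall>i<m. \<forall>j<n. 0 \<le> X i j) \<and> (\<forall>i<m. (\<Sum>j<n. X i j) = r i)"

definition saddle_point where
  "saddle_point n m kappa c T eps r Xs qs mus \<longleftrightarrow>
     inS n m r Xs
     \<and> (\<forall>X q. inS n m r X \<longrightarrow>
            lagr n m kappa c T eps r Xs qs mus \<le> lagr n m kappa c T eps r X q mus)
     \<and> (\<forall>mu. lagr n m kappa c T eps r Xs qs mu \<le> lagr n m kappa c T eps r Xs qs mus)"

definition equilibrium where
  "equilibrium n m kappa c T eps r Xs qs mus \<longleftrightarrow>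
     (\<forall>j<n. mus j = mu_fn T (c j) (qs j))
     \<and> (\<forall>i<m. \<forall>j<n. Xs i j = r i * delta n kappa eps mus i j)
     \<and> (\<forall>j<n. (\<Sum>i<m. Xs i j) = qs j / T)"

end

theory Submission
  imports Defs
begin


lemma D_core:
  fixes x g r :: real
  assumes "0 \<le> x" "0 < g" "0 < r"
  shows "x * ln (x / r) - x * ln (g / r) - x + g \<ge> 0"
    and "x \<noteq> g \<Longrightarrow> x * ln (x / r) - x * ln (g / r) - x + g > 0"
proof -
  have strict: "x * ln (x / r) - x * ln (g / r) - x + g > 0" if "x \<noteq> g"
  proof (cases "x = 0")
    case True then show ?thesis using assms by simp
  next
    case False
    then have xp: "x > 0" using assms by simp
    have "ln g - ln x < (g - x) / x" using ln_diff_less[of g x] xp assms that by auto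
    then have "x * (ln g - ln x) < g - x" using xp by (simp add: field_simps)
    moreover have eqs: "ln (x / r) = ln x - ln r" "ln (g / r) = ln g - ln r"
      using xp assms by (auto simp: ln_div)
    have "x * ln (x / r) - x * ln (g / r) = x * ((ln x - ln r) - (ln g - ln r))"
      by (simp only: eqs right_diff_distrib)
    then have "x * ln (x / r) - x * ln (g / r) = x * (ln x - ln g)" by simp
    then show ?thesis using \<open>x * (ln g - ln x) < g - x\<close> by (simp add: algebra_simps)
  qed
  show "x * ln (x / r) - x * ln (g / r) - x + g > 0" if "x \<noteq> g" using strict that .
  show "x * ln (x / r) - x * ln (g / r) - x + g \<ge> 0"
    using strict by (cases "x = g") auto
qed

lemma mu_fn_alt: "c > 0 \<Longrightarrow> mu_fn T c q = T * (1 - c / max c q)"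
  by (auto simp: mu_fn_def max_def)

lemma mu_fn_mono: "c > 0 \<Longrightarrow> T > 0 \<Longrightarrow> s \<le> s' \<Longrightarrow> mu_fn T c s \<le> mu_fn T c s'"
  unfolding mu_fn_alt
  by (intro mult_left_mono diff_left_mono divide_left_mono) (auto simp: max_def)

lemma mu_fn_bounds: "c > 0 \<Longrightarrow> T > 0 \<Longrightarrow> 0 \<le> mu_fn T c s \<and> mu_fn T c s < T"
  by (auto simp: mu_fn_def field_simps)

lemma mu_fn_cont: "c > 0 \<Longrightarrow> continuous_on UNIV (mu_fn T c)"
proof -
  assume c: "c > 0"
  have "continuous_on UNIV (\<lambda>q. T * (1 - c / max c q))"
    by (intro continuous_intros) (use c in auto)
  then show ?thesis using mu_fn_alt[OF c] by (simp add: fun_eq_iff)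
qed

lemma beta_nonneg: "c > 0 \<Longrightarrow> beta c q \<ge> 0"
proof -
  assume c: "c > 0"
  show ?thesis
  proof (cases "q \<le> c")
    case False
    then have "ln (q / c) \<le> q / c - 1" using c by (intro ln_le_minus_one) auto
    then have "c * ln (q / c) \<le> c * (q / c - 1)" using c by (intro mult_left_mono) auto
    then show ?thesis using False c by (simp add: beta_def algebra_simps)
  qed (simp add: beta_def)
qed

lemma qmin_suff:
  assumes c: "c > 0" and T: "T > 0" and mu: "mu = mu_fn T c s"
  shows "beta c s - mu * s / T \<le> beta c t - mu * t / T"
proof (cases "s \<le> c")
  case True
  then show ?thesis using mu beta_nonneg[OF c, of t] by (simp add: mu_fn_def beta_def)
next
  case False
  then have sp: "s > c" by simp
  have mus: "mu / T = 1 - c / s" using mu sp T by (simp add: mu_fn_def)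
  have lhs: "beta c s - mu * s / T = - c * ln (s / c)"
    using sp mus c by (simp add: beta_def field_simps)
  have l1: "ln (s / c) \<ge> 1 - c / s"
  proof -
    have "ln (c / s) \<le> c / s - 1" using c sp by (intro ln_le_minus_one) auto
    moreover have "ln (c / s) = - ln (s / c)" using c sp by (simp add: ln_div)
    ultimately show ?thesis by simp
  qed
  have p0: "1 - c / s > 0" using sp c by (simp add: field_simps)
  show ?thesis
  proof (cases "t \<le> c")
    case True
    have "mu * t / T = (mu / T) * t" by simp
    also have "\<dots> = (1 - c / s) * t" using mus by simp
    also have "\<dots> \<le> (1 - c / s) * c" using True p0 by (intro mult_left_mono) auto
    also have "\<dots> \<le> c * ln (s / c)" using l1 c by (simp add: mult.commute mult_left_mono)
    finally show ?thesis using True lhs by (simp add: beta_def)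
  next
    case False
    have l2: "ln (t / s) \<le> t / s - 1" using False c sp by (intro ln_le_minus_one) auto
    have e: "ln (t / c) = ln (t / s) + ln (s / c)" using False c sp by (simp add: ln_div)
    have "c * ln (t / s) \<le> c * (t / s - 1)" using l2 c by (intro mult_left_mono) auto
    moreover have "mu * t / T = (1 - c / s) * t" using mus by (metis times_divide_eq_left mult.commute)
    then have m2: "mu * t / T = t - c * (t / s)" by (simp add: algebra_simps)
    have "beta c t - mu * t / T = - c - c * ln (t / s) - c * ln (s / c) + c * (t / s)"
      using False m2 e by (simp add: beta_def algebra_simps)
    ultimately show ?thesis using lhs by (simp add: algebra_simps)
  qed
qed

lemma qmin_nec:
  assumes c: "c > 0" and T: "T > 0"
    and mn: "\<forall>t. beta c s - mu * s / T \<le> beta c t - mu * t / T"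
  shows "mu = mu_fn T c s"
proof (cases "s \<le> c")
  case True
  have "beta c s - mu * s / T \<le> beta c (s - 1) - mu * (s - 1) / T" using mn by blast
  then have "- (mu * s / T) \<le> - (mu * (s - 1) / T)" using True by (simp add: beta_def)
  then have "0 \<le> T * mu" using T by (simp add: field_simps)
  then have m0: "mu \<ge> 0" using T by (simp add: zero_le_mult_iff)
  have "\<not> mu > 0"
  proof
    assume mp: "mu > 0"
    define a where "a = mu / T"
    define th where "th = min a 1 / 2"
    have mT: "a > 0" using mp T by (simp add: a_def)
    have th0: "0 < th" "th < 1" "th < a" using mT by (auto simp: th_def min_def)
    define q where "q = c / (1 - th)"
    have qc: "q > c" using th0 c by (simp add: q_def field_simps)
    have thq: "1 - c / q = th" using th0 c by (simp add: q_def field_simps)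
    have l1: "ln (q / c) \<ge> 1 - c / q"
    proof -
      have "ln (c / q) \<le> c / q - 1" using c qc by (intro ln_le_minus_one) auto
      moreover have "ln (c / q) = - ln (q / c)" using c qc by (simp add: ln_div)
      ultimately show ?thesis by simp
    qed
    have "beta c q = q - c - c * ln (q / c)" using qc by (simp add: beta_def)
    also have "\<dots> \<le> q - c - c * (1 - c / q)" using l1 c by (simp add: mult_left_mono)
    also have "\<dots> = (q - c) * (1 - c / q)" using qc c by (simp add: field_simps)
    also have "\<dots> = (q - c) * th" using thq by simp
    also have "\<dots> < (q - c) * a" using qc th0 by (intro mult_strict_left_mono) auto
    also have "\<dots> = (q - c) * (mu / T)" by (simp add: a_def)
    finally have "beta c q < (q - c) * (mu / T)" .
    moreover have "mu * s / T \<le> mu * c / T" using True mp T by (simp add: divide_right_mono)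
    moreover have "beta c s = 0" using True by (simp add: beta_def)
    moreover have "beta c s - mu * s / T \<le> beta c q - mu * q / T" using mn by blast
    moreover have "(q - c) * (mu / T) = mu * q / T - mu * c / T" by (simp add: algebra_simps diff_divide_distrib)
    ultimately show False by linarith
  qed
  then show ?thesis using m0 True by (simp add: mu_fn_def)
next
  case False
  then have sc: "s > c" by simp
  define h where "h = (\<lambda>q. q - c - c * ln (q / c) - mu * q / T)"
  have d: "DERIV h s :> 1 - c * (1 / c) / (s / c) - mu / T"
    unfolding h_def using sc c T
    by (auto intro!: derivative_eq_intros)
  have "1 - c * (1 / c) / (s / c) - mu / T = 0"
  proof (rule DERIV_local_min[OF d, of "s - c"])
    show "0 < s - c" using sc by simp
    show "\<forall>y. \<bar>s - y\<bar> < s - c \<longrightarrow> h s \<le> h y"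
    proof (intro allI impI)
      fix y assume "\<bar>s - y\<bar> < s - c"
      then have "y > c" by auto
      moreover have "beta c s - mu * s / T \<le> beta c y - mu * y / T" using mn by blast
      ultimately show "h s \<le> h y" using sc by (simp add: h_def beta_def)
    qed
  qed
  then show ?thesis using sc c T by (simp add: mu_fn_def field_simps)
qed


lemma Z_pos: "(n::nat) \<ge> 1 \<Longrightarrow> (\<Sum>k<n. exp (f k :: real)) > 0"
  by (rule sum_pos) (auto simp: lessThan_empty_iff)

lemma delta_alt:
  assumes "j < n"
  shows "delta n kappa eps mu i j = 1 / (\<Sum>k<n. exp ((kappa i j + mu j - kappa i k - mu k) / eps))"
proof -
  let ?e = "exp (- (kappa i j + mu j) / eps)"
  have "(\<Sum>k<n. exp (- (kappa i k + mu k) / eps)) = (\<Sum>k<n. ?e * exp ((kappa i j + mu j - kappa i k - mu k) / eps))"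
    by (intro sum.cong refl) (simp add: exp_add[symmetric] diff_divide_distrib add_divide_distrib)
  also have "\<dots> = ?e * (\<Sum>k<n. exp ((kappa i j + mu j - kappa i k - mu k) / eps))"
    by (simp add: sum_distrib_left)
  finally show ?thesis by (simp add: delta_def)
qed

lemma delta_pos: "n \<ge> 1 \<Longrightarrow> delta n kappa eps mu i j > 0"
  unfolding delta_def by (intro divide_pos_pos Z_pos) auto

lemma delta_sum: "n \<ge> 1 \<Longrightarrow> (\<Sum>j<n. delta n kappa eps mu i j) = 1"
  unfolding delta_def using Z_pos[of n "\<lambda>k. - (kappa i k + mu k) / eps"]
  by (simp add: sum_divide_distrib[symmetric])

lemma delta_cong: "(\<forall>k<n. mu k = mu' k) \<Longrightarrow> j < n \<Longrightarrow> delta n kappa eps mu i j = delta n kappa eps mu' i j"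
  unfolding delta_def by simp

lemma delta_mono:
  assumes j: "j < n" and e: "eps > 0" and h: "\<forall>k<n. mu' j - mu' k \<le> mu j - mu k"
  shows "delta n kappa eps mu i j \<le> delta n kappa eps mu' i j"
proof -
  let ?S = "\<lambda>mu. (\<Sum>k<n. exp ((kappa i j + mu j - kappa i k - mu k) / eps))"
  have "?S mu' \<le> ?S mu"
    using h e by (intro sum_mono) (auto intro!: divide_right_mono)
  moreover have "?S mu' > 0" using j by (intro Z_pos) auto
  ultimately show ?thesis unfolding delta_alt[OF j] by (intro divide_left_mono) auto
qed

definition Fj :: "nat \<Rightarrow> nat \<Rightarrow> (nat \<Rightarrow> nat \<Rightarrow> real) \<Rightarrow> real \<Rightarrow> (nat \<Rightarrow> real) \<Rightarrow> (nat \<Rightarrow> real) \<Rightarrow> nat \<Rightarrow> real" where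
  "Fj n m kappa eps r mu j = (\<Sum>i<m. r i * delta n kappa eps mu i j)"

lemma cmp:
  assumes j: "j < n" and e: "eps > 0" and c: "c > 0" and T: "T > 0"
    and r: "\<forall>i<m. r i > 0"
    and h: "\<forall>k<n. nu' j - nu' k \<le> nu j - nu k"
    and f1: "nu j = mu_fn T c (T * Fj n m kappa eps r nu j)"
    and f2: "nu' j = mu_fn T c (T * Fj n m kappa eps r nu' j)"
  shows "nu j \<le> nu' j"
proof -
  have "Fj n m kappa eps r nu j \<le> Fj n m kappa eps r nu' j"
    unfolding Fj_def using r delta_mono[OF j e h]
    by (intro sum_mono mult_left_mono) auto
  then have "T * Fj n m kappa eps r nu j \<le> T * Fj n m kappa eps r nu' j"
    using T by simp
  from mu_fn_mono[OF c T this] show ?thesis using f1 f2 by simp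
qed


locale sys =
  fixes n m :: nat and kappa :: "nat \<Rightarrow> nat \<Rightarrow> real" and c r :: "nat \<Rightarrow> real" and T eps :: real
  assumes n1: "n \<ge> 1" and cpos: "\<forall>j<n. c j > 0" and Tpos: "T > 0" and epos: "eps > 0"
    and rpos: "\<forall>i<m. r i > 0"
begin

abbreviation F where "F mu j \<equiv> Fj n m kappa eps r mu j"

definition FP where "FP mu \<longleftrightarrow> (\<forall>j<n. mu j = mu_fn T (c j) (T * F mu j))"

lemma FP_le:
  assumes "FP mu" "FP mu'" shows "\<forall>k<n. mu k \<le> mu' k"
proof -
  let ?d = "\<lambda>k. mu k - mu' k"
  define M where "M = Max (?d ` {..<n})"
  have "0 \<in> {..<n}" using n1 by simp
  then have ne: "{..<n} \<noteq> {}" by blast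
  have "M \<in> ?d ` {..<n}" unfolding M_def using ne by (intro Max_in) auto
  then obtain j0 where j0: "j0 < n" "M = ?d j0" by auto
  have ge: "\<forall>k<n. ?d k \<le> M" unfolding M_def by (auto intro: Max_ge)
  have "mu j0 \<le> mu' j0"
  proof (rule cmp[OF j0(1) epos _ Tpos rpos, where nu=mu and nu'=mu'])
    show "0 < c j0" using cpos j0 by auto
    show "\<forall>k<n. mu' j0 - mu' k \<le> mu j0 - mu k" using ge j0 by force
    show "mu j0 = mu_fn T (c j0) (T * F mu j0)" using assms(1) j0 by (auto simp: FP_def)
    show "mu' j0 = mu_fn T (c j0) (T * F mu' j0)" using assms(2) j0 by (auto simp: FP_def)
  qed
  then show ?thesis using ge j0 by force
qed

lemma FP_unique: "FP mu \<Longrightarrow> FP mu' \<Longrightarrow> \<forall>k<n. mu k = mu' k"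
  using FP_le[of mu mu'] FP_le[of mu' mu] by force

definition G where "G mu j t = mu_fn T (c j) (T * F (mu(j:=t)) j)"

lemma upd_cont: "continuous_on S (\<lambda>t::real. (mu(j:=t)) k)"
  by (cases "k = j") (auto intro: continuous_intros)

lemma G_cont: "j < n \<Longrightarrow> continuous_on S (G mu j)"
proof -
  assume j: "j < n"
  have den: "(\<Sum>k<n. exp (- (kappa i k + (mu(j:=t)) k) / eps)) \<noteq> 0" for i t
    using Z_pos[OF n1] by (metis less_irrefl)
  have "continuous_on S (\<lambda>t. F (mu(j:=t)) j)"
    unfolding Fj_def delta_def
    by (intro continuous_intros upd_cont) (use den epos in auto)
  then have "continuous_on S (\<lambda>t. T * F (mu(j:=t)) j)" by (intro continuous_intros)
  from continuous_on_compose2[OF mu_fn_cont this subset_UNIV] show ?thesis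
    using cpos j unfolding G_def by auto
qed

lemma BR_ex: "j < n \<Longrightarrow> \<exists>t. 0 \<le> t \<and> t \<le> T \<and> t = G mu j t"
proof -
  assume j: "j < n"
  have cj: "c j > 0" using cpos j by auto
  have "\<exists>x. 0 \<le> x \<and> x \<le> T \<and> x - G mu j x = 0"
  proof (rule IVT')
    show "0 - G mu j 0 \<le> 0" using mu_fn_bounds[OF cj Tpos] by (simp add: G_def)
    show "0 \<le> T - G mu j T" using mu_fn_bounds[OF cj Tpos] by (simp add: G_def less_imp_le)
    show "0 \<le> T" using Tpos by simp
    show "continuous_on {0..T} (\<lambda>x. x - G mu j x)"
      using G_cont[OF j] by (intro continuous_intros) auto
  qed
  then show ?thesis by auto
qed

definition BR where "BR mu j = (if j < n then SOME t. 0 \<le> t \<and> t \<le> T \<and> t = G mu j t else 0)"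

lemma BR_prop: "j < n \<Longrightarrow> 0 \<le> BR mu j \<and> BR mu j \<le> T \<and> BR mu j = G mu j (BR mu j)"
  unfolding BR_def using someI_ex[OF BR_ex] by auto

lemma BR_mono:
  assumes le: "\<forall>k<n. mu k \<le> mu' k" and j: "j < n"
  shows "BR mu j \<le> BR mu' j"
proof (rule ccontr)
  assume "\<not> BR mu j \<le> BR mu' j"
  then have lt: "BR mu' j < BR mu j" by simp
  define t where "t = BR mu j"
  define t' where "t' = BR mu' j"
  have "(mu(j:=t)) j \<le> (mu'(j:=t')) j"
  proof (rule cmp[OF j epos _ Tpos rpos, where nu="mu(j:=t)" and nu'="mu'(j:=t')"])
    show "0 < c j" using cpos j by auto
    show "\<forall>k<n. (mu'(j:=t')) j - (mu'(j:=t')) k \<le> (mu(j:=t)) j - (mu(j:=t)) k"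
      using le lt by (auto simp: t_def t'_def)
    show "(mu(j:=t)) j = mu_fn T (c j) (T * F (mu(j:=t)) j)"
      using BR_prop[OF j, of mu] by (simp add: t_def G_def)
    show "(mu'(j:=t')) j = mu_fn T (c j) (T * F (mu'(j:=t')) j)"
      using BR_prop[OF j, of mu'] by (simp add: t'_def G_def)
  qed
  then show False using lt by (simp add: t_def t'_def)
qed

lemma FP_exists: "\<exists>mu. FP mu"
proof -
  define P where "P = {mu. \<forall>k<n. 0 \<le> mu k \<and> mu k \<le> T}"
  define A where "A = {mu \<in> P. \<forall>k<n. mu k \<le> BR mu k}"
  define ms where "ms = (\<lambda>k. Sup ((\<lambda>mu. mu k) ` A))"
  have zA: "(\<lambda>_. 0) \<in> A" using BR_prop Tpos by (auto simp: A_def P_def)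
  have bdd: "bdd_above ((\<lambda>mu. mu k) ` A)" if "k < n" for k
    using that by (auto simp: A_def P_def bdd_above_def)
  have upper: "mu k \<le> ms k" if "mu \<in> A" "k < n" for mu k
    unfolding ms_def using that bdd by (intro cSup_upper) auto
  have msP: "ms \<in> P"
  proof -
    have "0 \<le> ms k \<and> ms k \<le> T" if "k < n" for k
    proof
      show "0 \<le> ms k" using upper[OF zA that] by simp
      show "ms k \<le> T" unfolding ms_def using that zA
        by (intro cSup_least) (auto simp: A_def P_def)
    qed
    then show ?thesis by (simp add: P_def)
  qed
  have ms_le: "ms k \<le> BR ms k" if "k < n" for k
  proof -
  have "Sup ((\<lambda>mu. mu k) ` A) \<le> BR ms k"
  proof (rule cSup_least)
    show "(\<lambda>mu. mu k) ` A \<noteq> {}" using zA by auto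
    fix x assume "x \<in> (\<lambda>mu. mu k) ` A"
    then obtain mu where mu: "mu \<in> A" "x = mu k" by auto
    have "mu k \<le> BR mu k" using mu that by (auto simp: A_def)
    also have "\<dots> \<le> BR ms k" using upper[OF mu(1)] that by (intro BR_mono) auto
    finally show "x \<le> BR ms k" using mu by simp
  qed
  then show ?thesis by (simp add: ms_def)
  qed
  have "BR ms \<in> A"
    unfolding A_def P_def using BR_prop ms_le BR_mono by auto
  then have "BR ms k \<le> ms k" if "k < n" for k using upper that by auto
  then have eq: "ms k = BR ms k" if "k < n" for k using ms_le that by (simp add: order_antisym)
  have "FP ms"
    unfolding FP_def
  proof (intro allI impI)
    fix j assume j: "j < n"
    have "ms j = G ms j (ms j)" using BR_prop[OF j, of ms] eq[OF j] by simp
    then show "ms j = mu_fn T (c j) (T * F ms j)" by (simp add: G_def)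
  qed
  then show ?thesis by blast
qed

end


lemma sum_upd:
  fixes f :: "nat \<Rightarrow> real \<Rightarrow> real"
  assumes "j < n"
  shows "(\<Sum>k<n. f k ((q(j:=t)) k)) = (\<Sum>k<n. f k (q k)) - f j (q j) + f j t"
proof -
  have fin: "finite {..<n}" and jin: "j \<in> {..<n}" using assms by auto
  have "(\<Sum>k<n. f k ((q(j:=t)) k)) = f j ((q(j:=t)) j) + (\<Sum>k\<in>{..<n} - {j}. f k ((q(j:=t)) k))"
    by (rule sum.remove[OF fin jin])
  also have "f j ((q(j:=t)) j) = f j t" by simp
  also have "(\<Sum>k\<in>{..<n} - {j}. f k ((q(j:=t)) k)) = (\<Sum>k\<in>{..<n} - {j}. f k (q k))"
    by (intro sum.cong) auto
  also have "\<dots> = (\<Sum>k<n. f k (q k)) - f j (q j)"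
    using sum.remove[OF fin jin, of "\<lambda>k. f k (q k)"] by simp
  finally show ?thesis by simp
qed

lemma phi_identity:
  fixes a x g r L lz eps :: real
  assumes e: "eps > 0" and L: "L = - a / eps - lz"
  shows "a * x + eps * (x * ln (x / r)) - (a * g + eps * (g * L))
       = eps * (1 - lz) * (x - g) + eps * (x * ln (x / r) - x * L - x + g)"
proof -
  show ?thesis unfolding L using e by (simp add: field_simps)
qed

context sys
begin

definition AX where
  "AX X mu = (\<Sum>i<m. \<Sum>j<n. (kappa i j + mu j) * X i j + eps * (X i j * ln (X i j / r i)))"

definition BQ where
  "BQ q mu = (\<Sum>j<n. beta (c j) (q j) - mu j * q j / T)"

lemma lagr_split: "lagr n m kappa c T eps r X q mu = AX X mu + BQ q mu"
proof -
  have e1: "(\<Sum>j<n. mu j * ((\<Sum>i<m. X i j) - q j / T))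
      = (\<Sum>i<m. \<Sum>j<n. mu j * X i j) - (\<Sum>j<n. mu j * q j / T)"
    by (simp add: right_diff_distrib sum_subtractf sum_distrib_left sum.swap[of _ "{..<n}"])
  have e2: "AX X mu = (\<Sum>i<m. \<Sum>j<n. kappa i j * X i j) + eps * (\<Sum>i<m. \<Sum>j<n. X i j * ln (X i j / r i))
      + (\<Sum>i<m. \<Sum>j<n. mu j * X i j)"
    unfolding AX_def by (simp add: sum.distrib sum_distrib_left algebra_simps)
  have e3: "BQ q mu = (\<Sum>j<n. beta (c j) (q j)) - (\<Sum>j<n. mu j * q j / T)"
    unfolding BQ_def by (simp add: sum_subtractf)
  show ?thesis unfolding lagr_def e1 e2 e3 by simp
qed

lemma lagr_mu_diff:
  "lagr n m kappa c T eps r X q mu' - lagr n m kappa c T eps r X q mu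
     = (\<Sum>j<n. (mu' j - mu j) * ((\<Sum>i<m. X i j) - q j / T))"
  unfolding lagr_def by (simp add: sum_subtractf[symmetric] left_diff_distrib)

abbreviation Gb where "Gb mu \<equiv> (\<lambda>i j. r i * delta n kappa eps mu i j)"

lemma Gb_inS: "inS n m r (Gb mu)"
  unfolding inS_def using delta_pos[OF n1] delta_sum[OF n1] rpos
  by (auto simp: sum_distrib_left[symmetric] less_imp_le)

lemma gibbs:
  assumes X: "inS n m r X"
  shows "AX (Gb mu) mu \<le> AX X mu"
    and "(\<exists>i<m. \<exists>j<n. X i j \<noteq> Gb mu i j) \<Longrightarrow> AX (Gb mu) mu < AX X mu"
proof -
  define Z where "Z i = (\<Sum>k<n. exp (- (kappa i k + mu k) / eps))" for i
  have Zp: "Z i > 0" for i unfolding Z_def by (rule Z_pos[OF n1])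
  define D where "D i j = X i j * ln (X i j / r i) - X i j * ln (Gb mu i j / r i) - X i j + Gb mu i j" for i j
  have Lg: "ln (Gb mu i j / r i) = - (kappa i j + mu j) / eps - ln (Z i)" if "i < m" for i j
  proof -
    have "Gb mu i j / r i = exp (- (kappa i j + mu j) / eps) / Z i"
    proof -
      have "r i > 0" using rpos that by simp
      then show ?thesis by (simp add: delta_def Z_def)
    qed
    then have "ln (Gb mu i j / r i) = ln (exp (- (kappa i j + mu j) / eps) / Z i)" by simp
    also have "\<dots> = - (kappa i j + mu j) / eps - ln (Z i)"
      using Zp[of i] by (subst ln_div) auto
    finally show ?thesis .
  qed
  have phit: "(kappa i j + mu j) * X i j + eps * (X i j * ln (X i j / r i))
      - ((kappa i j + mu j) * Gb mu i j + eps * (Gb mu i j * ln (Gb mu i j / r i)))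
      = eps * (1 - ln (Z i)) * (X i j - Gb mu i j) + eps * D i j" if "i < m" for i j
    unfolding D_def by (rule phi_identity[OF epos Lg[OF that]])
  have Dnn: "D i j \<ge> 0" and Dpos: "X i j \<noteq> Gb mu i j \<Longrightarrow> D i j > 0" if "i < m" "j < n" for i j
  proof -
    have x0: "0 \<le> X i j" using X that by (auto simp: inS_def)
    have g0: "0 < Gb mu i j" using rpos delta_pos[OF n1] that by simp
    have r0: "0 < r i" using rpos that by simp
    show "D i j \<ge> 0" unfolding D_def using D_core(1)[OF x0 g0 r0] .
    show "D i j > 0" if "X i j \<noteq> Gb mu i j" unfolding D_def using D_core(2)[OF x0 g0 r0 that] .
  qed
  have sG: "(\<Sum>j<n. Gb mu i j) = r i" for i
    using delta_sum[OF n1] by (simp add: sum_distrib_left[symmetric])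
  have sX: "(\<Sum>j<n. X i j) = r i" if "i < m" for i using X that by (simp add: inS_def)
  have "AX X mu - AX (Gb mu) mu = (\<Sum>i<m. \<Sum>j<n. eps * (1 - ln (Z i)) * (X i j - Gb mu i j) + eps * D i j)"
    unfolding AX_def sum_subtractf[symmetric] by (intro sum.cong refl) (simp only: phit lessThan_iff)
  also have "\<dots> = (\<Sum>i<m. eps * (1 - ln (Z i)) * ((\<Sum>j<n. X i j) - (\<Sum>j<n. Gb mu i j)) + eps * (\<Sum>j<n. D i j))"
    by (simp add: sum.distrib sum_distrib_left sum_subtractf right_diff_distrib)
  also have "\<dots> = (\<Sum>i<m. eps * (\<Sum>j<n. D i j))"
    using sX sG by (intro sum.cong) auto
  finally have diff: "AX X mu - AX (Gb mu) mu = (\<Sum>i<m. eps * (\<Sum>j<n. D i j))" .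
  have "(\<Sum>i<m. eps * (\<Sum>j<n. D i j)) \<ge> 0"
    using epos Dnn by (intro sum_nonneg mult_nonneg_nonneg) auto
  then show "AX (Gb mu) mu \<le> AX X mu" using diff by simp
  assume "\<exists>i<m. \<exists>j<n. X i j \<noteq> Gb mu i j"
  then obtain i0 j0 where ij: "i0 < m" "j0 < n" "X i0 j0 \<noteq> Gb mu i0 j0" by blast
  have "(\<Sum>j<n. D i0 j) > 0"
    using ij Dnn Dpos by (intro sum_pos2[of _ j0]) auto
  then have "(\<Sum>i<m. eps * (\<Sum>j<n. D i j)) > 0"
    using epos Dnn ij by (intro sum_pos2[of _ i0]) (auto intro!: sum_nonneg mult_nonneg_nonneg)
  then show "AX (Gb mu) mu < AX X mu" using diff by simp
qed

end


context sys
begin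

lemma saddle_iff:
  "saddle_point n m kappa c T eps r Xs qs mus \<longleftrightarrow> equilibrium n m kappa c T eps r Xs qs mus"
proof
  assume sp: "saddle_point n m kappa c T eps r Xs qs mus"
  have S: "inS n m r Xs"
    and mn: "\<And>X q. inS n m r X \<Longrightarrow> lagr n m kappa c T eps r Xs qs mus \<le> lagr n m kappa c T eps r X q mus"
    and mx: "\<And>mu. lagr n m kappa c T eps r Xs qs mu \<le> lagr n m kappa c T eps r Xs qs mus"
    using sp unfolding saddle_point_def by auto
  have cons: "(\<Sum>i<m. Xs i j) = qs j / T" if j: "j < n" for j
  proof -
    define e where "e k = (\<Sum>i<m. Xs i k) - qs k / T" for k
    define mu' where "mu' = mus(j := mus j + e j)"
    have "lagr n m kappa c T eps r Xs qs mu' - lagr n m kappa c T eps r Xs qs mus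
        = (\<Sum>k<n. (mu' k - mus k) * e k)"
      unfolding lagr_mu_diff e_def ..
    also have "\<dots> = (\<Sum>k<n. (if k = j then e j * e j else 0))"
      by (intro sum.cong) (auto simp: mu'_def)
    also have "\<dots> = e j * e j" using j by simp
    finally have "e j * e j \<le> 0" using mx[of mu'] by simp
    then have "e j = 0" by (metis mult_eq_0_iff not_square_less_zero order_antisym_conv zero_le_square)
    then show ?thesis by (simp add: e_def)
  qed
  have Xeq: "Xs i j = r i * delta n kappa eps mus i j" if "i < m" "j < n" for i j
  proof (rule ccontr)
    assume "\<not> ?thesis"
    then have "AX (Gb mus) mus < AX Xs mus" using gibbs(2)[OF S] that by blast
    moreover have "lagr n m kappa c T eps r Xs qs mus \<le> lagr n m kappa c T eps r (Gb mus) qs mus"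
      using mn[OF Gb_inS] .
    ultimately show False unfolding lagr_split by simp
  qed
  have mueq: "mus j = mu_fn T (c j) (qs j)" if j: "j < n" for j
  proof (rule qmin_nec)
    show "c j > 0" using cpos j by simp
    show "T > 0" by (rule Tpos)
    show "\<forall>t. beta (c j) (qs j) - mus j * qs j / T \<le> beta (c j) t - mus j * t / T"
    proof
      fix t
      have "lagr n m kappa c T eps r Xs qs mus \<le> lagr n m kappa c T eps r Xs (qs(j:=t)) mus"
        using mn[OF S] .
      then have "BQ qs mus \<le> BQ (qs(j:=t)) mus" unfolding lagr_split by simp
      then show "beta (c j) (qs j) - mus j * qs j / T \<le> beta (c j) t - mus j * t / T"
        unfolding BQ_def using sum_upd[OF j, of "\<lambda>k x. beta (c k) x - mus k * x / T" qs t]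
        by simp
    qed
  qed
  show "equilibrium n m kappa c T eps r Xs qs mus"
    unfolding equilibrium_def using cons Xeq mueq by blast
next
  assume eq: "equilibrium n m kappa c T eps r Xs qs mus"
  have mueq: "\<And>j. j < n \<Longrightarrow> mus j = mu_fn T (c j) (qs j)"
    and Xeq: "\<And>i j. i < m \<Longrightarrow> j < n \<Longrightarrow> Xs i j = r i * delta n kappa eps mus i j"
    and cons: "\<And>j. j < n \<Longrightarrow> (\<Sum>i<m. Xs i j) = qs j / T"
    using eq unfolding equilibrium_def by auto
  have AXeq: "AX Xs mu = AX (Gb mus) mu" for mu
    unfolding AX_def using Xeq by (intro sum.cong refl) simp
  have S: "inS n m r Xs"
    using Gb_inS[of mus] Xeq unfolding inS_def by simp
  have "lagr n m kappa c T eps r Xs qs mus \<le> lagr n m kappa c T eps r X q mus" if X: "inS n m r X" for X q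
  proof -
    have "AX Xs mus \<le> AX X mus" using AXeq gibbs(1)[OF X] by simp
    moreover have "BQ qs mus \<le> BQ q mus"
      unfolding BQ_def
    proof (rule sum_mono)
      fix j assume "j \<in> {..<n}"
      then have j: "j < n" by simp
      show "beta (c j) (qs j) - mus j * qs j / T \<le> beta (c j) (q j) - mus j * q j / T"
        using qmin_suff[of "c j" T "mus j" "qs j" "q j"] cpos Tpos mueq[OF j] j by simp
    qed
    ultimately show ?thesis unfolding lagr_split by simp
  qed
  moreover have "lagr n m kappa c T eps r Xs qs mu \<le> lagr n m kappa c T eps r Xs qs mus" for mu
  proof -
    have "lagr n m kappa c T eps r Xs qs mu - lagr n m kappa c T eps r Xs qs mus = 0"
      unfolding lagr_mu_diff using cons by simp
    then show ?thesis by simp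
  qed
  ultimately show "saddle_point n m kappa c T eps r Xs qs mus"
    unfolding saddle_point_def using S by blast
qed

lemma eq_FP:
  assumes "equilibrium n m kappa c T eps r X q mu"
  shows "FP mu" and "\<forall>j<n. q j = T * F mu j" and "\<forall>i<m. \<forall>j<n. X i j = r i * delta n kappa eps mu i j"
proof -
  have mueq: "\<And>j. j < n \<Longrightarrow> mu j = mu_fn T (c j) (q j)"
    and Xeq: "\<And>i j. i < m \<Longrightarrow> j < n \<Longrightarrow> X i j = r i * delta n kappa eps mu i j"
    and cons: "\<And>j. j < n \<Longrightarrow> (\<Sum>i<m. X i j) = q j / T"
    using assms unfolding equilibrium_def by auto
  have qF: "q j = T * F mu j" if "j < n" for j
  proof -
    have "q j = T * (\<Sum>i<m. X i j)" using cons[OF that] Tpos by simp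
    also have "(\<Sum>i<m. X i j) = F mu j" unfolding Fj_def using Xeq that by (intro sum.cong) auto
    finally show ?thesis .
  qed
  show "FP mu" unfolding FP_def using mueq qF by simp
  show "\<forall>j<n. q j = T * F mu j" using qF by simp
  show "\<forall>i<m. \<forall>j<n. X i j = r i * delta n kappa eps mu i j" using Xeq by simp
qed

lemma exists_unique:
  "\<exists>X q mu. equilibrium n m kappa c T eps r X q mu
     \<and> (\<forall>X' q' mu'. equilibrium n m kappa c T eps r X' q' mu' \<longrightarrow>
          (\<forall>i<m. \<forall>j<n. X' i j = X i j) \<and> (\<forall>j<n. q' j = q j \<and> mu' j = mu j))"
proof -
  obtain mu where fp: "FP mu" using FP_exists by blast
  define X where "X i j = r i * delta n kappa eps mu i j" for i j
  define q where "q j = T * F mu j" for j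
  have eq: "equilibrium n m kappa c T eps r X q mu"
    unfolding equilibrium_def
  proof (intro conjI allI impI)
    fix j assume j: "j < n"
    show "mu j = mu_fn T (c j) (q j)" using fp j by (simp add: FP_def q_def)
    show "(\<Sum>i<m. X i j) = q j / T" using Tpos by (simp add: X_def q_def Fj_def)
  next
    fix i j show "X i j = r i * delta n kappa eps mu i j" by (simp add: X_def)
  qed
  have "(\<forall>i<m. \<forall>j<n. X' i j = X i j) \<and> (\<forall>j<n. q' j = q j \<and> mu' j = mu j)"
    if eq': "equilibrium n m kappa c T eps r X' q' mu'" for X' q' mu'
  proof -
    note e = eq_FP[OF eq']
    have same: "\<forall>k<n. mu' k = mu k" using FP_unique[OF e(1) fp] .
    have dl: "delta n kappa eps mu' i j = delta n kappa eps mu i j" if "j < n" for i j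
      using delta_cong[OF same that] .
    have "F mu' j = F mu j" if "j < n" for j unfolding Fj_def using dl[OF that] by simp
    then show ?thesis using e(2,3) same dl by (simp add: X_def q_def)
  qed
  then show ?thesis using eq by blast
qed

end

theorem theorem1:
  fixes n m :: nat and c r mu_s q_s :: "nat \<Rightarrow> real" and T eps :: real
    and kappa X_s :: "nat \<Rightarrow> nat \<Rightarrow> real"
  assumes "n \<ge> 1" and "m \<ge> 1"
    and "\<forall>j<n. c j > 0" and "T > 0" and "eps > 0"
    and "\<forall>i<m. r i > 0"
    and "\<forall>i<m. \<forall>j<n. kappa i j \<ge> 0"
  shows "(saddle_point n m kappa c T eps r X_s q_s mu_s
            \<longleftrightarrow> equilibrium n m kappa c T eps r X_s q_s mu_s)
       \<and> (\<exists>X q mu. equilibrium n m kappa c T eps r X q mu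
            \<and> (\<forall>X' q' mu'. equilibrium n m kappa c T eps r X' q' mu' \<longrightarrow>
                 (\<forall>i<m. \<forall>j<n. X' i j = X i j) \<and> (\<forall>j<n. q' j = q j \<and> mu' j = mu j)))"
proof -
  interpret S: sys n m kappa c r T eps
    using assms by unfold_locales auto
  show ?thesis using S.saddle_iff S.exists_unique by blast
qed

end
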